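(* Let $p$ be an odd prime, $m$ a positive integer, and let $1,\alpha,\beta\in\mathbb{F}_{p^m}$ be linearly independent over $\mathbb{F}_p$. Let $\eta$ be the quadratic character of $\mathbb{F}_{p^m}$ and $\epsilon_p=e^{2\pi i/p}$. If \[\Big|\sum_{y_1,y_2\in\mathbb{F}_p}\eta(1+y_1\alpha+y_2\beta)\,\epsilon_p^{-y_1y_2}\Big|\neq p,\] then the function $F:\mathbb{F}_{p^m}\times\mathbb{F}_p^2\to\mathbb{F}_p$, \[F(x,y_1,y_2)=\mathrm{Tr}_m(x^2)+\big(y_1+\mathrm{Tr}_m(\alpha x^2)\big)\big(y_2+\mathrm{Tr}_m(\beta x^2)\big),\] is a non-dual-bent function (i.e. $F$ is bent but its dual $F^*$ is not bent).
   Context: $\mathrm{Tr}_m$ is the absolute trace $\mathbb{F}_{p^m}\to\mathbb{F}_p$. Inner product on $\mathbb{F}_{p^m}\times\mathbb{F}_p^2$: $\langle (a,b_1,b_2),(x,y_1,y_2)\rangle=\mathrm{Tr}_m(ax)+b_1y_1+b_2y_2$. Walsh transform of $f:V\to\mathbb{F}_p$ ($\dim V=N$): $\widehat f(b)=\sum_{x\in V}\epsilon_p^{f(x)-\langle b,x\rangle}$; $f$ is bent if $|\widehat f(b)|=p^{N/2}$ for all $b$. For bent $f$ (odd $p$), $\widehat f(b)=\zeta_bp^{N/2}\epsilon_p^{f^*(b)}$ with $\zeta_b\in\{\pm1,\pm i\}$, defining the dual $f^*:V\to\mathbb{F}_p$. A bent function is dual-bent if $f^*$ is bent, and non-dual-bent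 otherwise. *)

theory Defs
  imports "HOL-Analysis.Analysis"
begin

text \<open>The field F_{p^m} is a finite field type 'a with CARD('a) = p^m.
  The prime field F_p is represented by the integers {0..<p}; an integer k stands
  for the residue class k mod p, embedded into 'a by of_int.\<close>

definition trace :: "nat \<Rightarrow> nat \<Rightarrow> 'a::{field,finite} \<Rightarrow> 'a" where
  "trace p m x = (\<Sum>i<m. x ^ (p ^ i))"

definition tr :: "nat \<Rightarrow> nat \<Rightarrow> 'a::{field,finite} \<Rightarrow> int" where
  "tr p m x = (THE k. k \<in> {0..<int p} \<and> of_int k = trace p m x)"

definition qchar :: "'a::{field,finite} \<Rightarrow> int" where
  "qchar x = (if x = 0 then 0 else if (\<exists>y. x = y ^ 2) then 1 else -1)"

text \<open>epsilon_p ^ k, for k an integer (only k mod p matters).\<close>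
definition ep :: "nat \<Rightarrow> int \<Rightarrow> complex" where
  "ep p k = cis (2 * pi * of_int k / of_nat p)"

definition Vsp :: "nat \<Rightarrow> ('a::{field,finite} \<times> int \<times> int) set" where
  "Vsp p = UNIV \<times> {0..<int p} \<times> {0..<int p}"

definition ip :: "nat \<Rightarrow> nat \<Rightarrow> ('a::{field,finite} \<times> int \<times> int) \<Rightarrow> ('a \<times> int \<times> int) \<Rightarrow> int" where
  "ip p m u v = (case u of (a, b1, b2) \<Rightarrow> case v of (x, y1, y2) \<Rightarrow>
      (tr p m (a * x) + b1 * y1 + b2 * y2) mod int p)"

definition walsh :: "nat \<Rightarrow> nat \<Rightarrow> (('a::{field,finite} \<times> int \<times> int) \<Rightarrow> int) \<Rightarrow> ('a \<times> int \<times> int) \<Rightarrow> complex" where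
  "walsh p m f b = (\<Sum>x\<in>Vsp p. ep p (f x - ip p m b x))"

definition bent :: "nat \<Rightarrow> nat \<Rightarrow> (('a::{field,finite} \<times> int \<times> int) \<Rightarrow> int) \<Rightarrow> bool" where
  "bent p m f \<longleftrightarrow> (\<forall>b\<in>Vsp p. cmod (walsh p m f b) = sqrt (real p) ^ (m + 2))"

definition dual :: "nat \<Rightarrow> nat \<Rightarrow> (('a::{field,finite} \<times> int \<times> int) \<Rightarrow> int) \<Rightarrow> ('a \<times> int \<times> int) \<Rightarrow> int" where
  "dual p m f b = (THE k. k \<in> {0..<int p} \<and>
      (\<exists>z\<in>{1, -1, \<i>, -\<i>}. walsh p m f b = z * complex_of_real (sqrt (real p) ^ (m + 2)) * ep p k))"

definition non_dual_bent :: "nat \<Rightarrow> nat \<Rightarrow> (('a::{field,finite} \<times> int \<times> int) \<Rightarrow> int) \<Rightarrow> bool" where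
  "non_dual_bent p m f \<longleftrightarrow> bent p m f \<and> \<not> bent p m (dual p m f)"

end

theory Submission
  imports Defs "HOL-Computational_Algebra.Polynomial" "HOL-Number_Theory.Residues" "HOL-Computational_Algebra.Primes"
begin


locale ffp =
  fixes p m :: nat and T :: "'a::{field,finite} itself"
  assumes p_prime: "prime p" and p_odd: "odd p" and m_pos: "m > 0"
    and card_a: "CARD('a) = p ^ m"
begin

lemma p_gt2: "p > 2"
  using p_prime p_odd prime_ge_2_nat by (metis dvd_refl le_neq_implies_less)

lemma CHAR_a: "CHAR('a) = p"
proof -
  have pos: "CHAR('a) > 0" by (rule finite_imp_CHAR_pos) simp
  have pr: "prime CHAR('a)" using prime_CHAR_semidom[OF pos] .
  have "CHAR('a) dvd p ^ m" using CHAR_dvd_CARD[where 'a='a] card_a by simp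
  hence "CHAR('a) dvd p" using pr prime_dvd_power by blast
  thus ?thesis using pr p_prime primes_dvd_imp_eq by blast
qed

lemma of_int_eq_iff_mod: "(of_int a :: 'a) = of_int b \<longleftrightarrow> a mod int p = b mod int p"
  using of_int_eq_iff_cong_CHAR[where 'a='a, of a b] CHAR_a by (simp add: cong_def)

lemma frob: "((x::'a) + y) ^ (p ^ i) = x ^ (p ^ i) + y ^ (p ^ i)"
  using freshmans_dream'[where x=x and y=y and m="p^i" and n=i] CHAR_a p_prime by simp

lemma frob_sum: "(sum (f::'b \<Rightarrow> 'a) A) ^ (p ^ i) = sum (\<lambda>j. f j ^ (p ^ i)) A"
  using freshmans_dream_sum'[of "p^i" i f A] CHAR_a p_prime by simp

lemma pow_card: "(x::'a) ^ CARD('a) = x"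
proof (cases "x = 0")
  case False
  have "x * (\<Prod>y\<in>UNIV-{0}. x * y) = x * x ^ (card (UNIV :: 'a set) - 1) * \<Prod>(UNIV-{0})"
    by (simp add: prod.distrib mult_ac)
  also have "x * x ^ (card (UNIV :: 'a set) - 1) = x ^ Suc (card (UNIV :: 'a set) - 1)"
    by (subst power_Suc) auto
  also have "Suc (card (UNIV :: 'a set) - 1) = card (UNIV :: 'a set)"
    using finite_UNIV_card_ge_0[where ?'a = 'a] by simp
  also have "(\<Prod>y\<in>UNIV-{0}. x * y) = (\<Prod>y\<in>UNIV-{0}. y)"
    by (rule prod.reindex_bij_witness[of _ "\<lambda>y. y / x" "\<lambda>y. x * y"]) (use False in auto)
  finally show ?thesis
    by simp
qed (use finite_UNIV_card_ge_0[where ?'a = 'a] in auto)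

lemma pow_pm: "(x::'a) ^ (p ^ m) = x"
  using pow_card card_a by simp

abbreviation "Tr \<equiv> (trace p m :: 'a \<Rightarrow> 'a)"

lemma trace_add: "Tr (x + y) = Tr x + Tr y"
  by (simp add: trace_def frob sum.distrib)

lemma trace_pow: "Tr x ^ p = Tr x"
proof -
  have "Tr x ^ p = (\<Sum>i<m. x ^ (p ^ Suc i))"
    unfolding trace_def using frob_sum[of "\<lambda>i. x ^ (p ^ i)" "{..<m}" 1]
    by (simp add: power_mult[symmetric] mult.commute)
  also have "\<dots> = (\<Sum>i<Suc m. x ^ (p ^ i)) - x ^ (p ^ 0)"
    by (subst sum.lessThan_Suc_shift) simp
  also have "\<dots> = Tr x"
    by (simp add: trace_def pow_pm)
  finally show ?thesis .
qed

lemma of_nat_pow_p: "(of_nat n :: 'a) ^ p = of_nat n"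
proof (induction n)
  case 0 then show ?case using p_gt2 by simp
next
  case (Suc n)
  have "(of_nat (Suc n) :: 'a) ^ p = (of_nat n + 1 :: 'a) ^ (p ^ 1)" by (simp add: add.commute)
  also have "\<dots> = (of_nat n + 1 :: 'a)" by (subst frob) (use Suc in simp)
  finally show ?case by (metis of_nat_Suc add.commute)
qed

lemma prime_field_roots: "{t::'a. t ^ p = t} = of_int ` {0..<int p}"
proof -
  define P :: "'a poly" where "P = Polynomial.monom 1 p + [:0, -1:]"
  have degP: "degree P = p" unfolding P_def using p_gt2
    by (subst degree_add_eq_left) (auto simp: degree_monom_eq)
  hence "P \<noteq> 0" using p_gt2 by auto
  have roots: "{t. t ^ p = t} = {t. poly P t = 0}"
    by (auto simp: P_def poly_monom)
  have sub: "of_int ` {0..<int p} \<subseteq> {t::'a. t ^ p = t}"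
  proof
    fix t :: 'a assume "t \<in> of_int ` {0..<int p}"
    then obtain k where k: "k \<in> {0..<int p}" "t = of_int k" by auto
    hence "t = of_nat (nat k)" by simp
    thus "t \<in> {t. t ^ p = t}" using of_nat_pow_p[of "nat k"] by simp
  qed
  have inj: "inj_on (of_int :: int \<Rightarrow> 'a) {0..<int p}"
    by (auto simp: inj_on_def of_int_eq_iff_mod)
  have "card (of_int ` {0..<int p} :: 'a set) = p"
    using card_image[OF inj] by simp
  moreover have "card {t::'a. t ^ p = t} \<le> p"
    using card_poly_roots_bound[OF \<open>P \<noteq> 0\<close>] degP roots by simp
  moreover have "card (of_int ` {0..<int p} :: 'a set) \<le> card {t::'a. t ^ p = t}"
    by (rule card_mono[OF _ sub]) simp
  ultimately show ?thesis
    using sub by (intro card_subset_eq[symmetric]) auto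
qed

lemma tr_prop: "tr p m x \<in> {0..<int p} \<and> of_int (tr p m x) = Tr x"
proof -
  have "Tr x \<in> {t::'a. t ^ p = t}" using trace_pow by simp
  then obtain k where k: "k \<in> {0..<int p}" "of_int k = Tr x"
    using prime_field_roots by auto
  have "\<exists>!k. k \<in> {0..<int p} \<and> of_int k = Tr x"
  proof (rule ex1I[of _ k])
    fix j assume "j \<in> {0..<int p} \<and> of_int j = Tr x"
    hence j: "j \<in> {0..<int p}" "of_int j = Tr x" by auto
    hence "j mod p = k mod p" using k of_int_eq_iff_mod[of j k] by auto
    thus "j = k" using k j by (simp add: mod_pos_pos_trivial)
  qed (use k in auto)
  thus ?thesis unfolding tr_def by (rule theI')
qed

lemma of_int_tr: "of_int (tr p m x) = Tr x"
  using tr_prop by blast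

lemma trace_0: "Tr 0 = 0"
  using p_gt2 by (auto simp: trace_def power_0_left intro!: sum.neutral)

lemma trace_neg: "Tr (- x) = - Tr x"
proof -
  have "Tr (-x) + Tr x = 0" using trace_add[of "-x" x] trace_0 by simp
  thus ?thesis using add_eq_0_iff2 by blast
qed

lemma trace_diff: "Tr (x - y) = Tr x - Tr y"
  using trace_add[of x "-y"] trace_neg[of y] by simp

lemma trace_of_nat_mult: "Tr (of_nat n * x) = of_nat n * Tr x"
  by (induction n) (simp_all add: trace_0 trace_add distrib_right)

lemma trace_of_int_mult: "Tr (of_int k * x) = of_int k * Tr x"
proof (cases "k \<ge> 0")
  case True
  then show ?thesis using trace_of_nat_mult[of "nat k" x] by simp
next
  case False
  define n where "n = nat (- k)"
  have "k = - int n" using False by (simp add: n_def)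
  then show ?thesis using trace_of_nat_mult[of n x] trace_neg[of "of_nat n * x"] by simp
qed

lemma trace_nonzero: "\<exists>v. Tr v \<noteq> 0"
proof (rule ccontr)
  assume "\<not> (\<exists>v. Tr v \<noteq> 0)"
  hence all0: "\<And>v. Tr v = 0" by blast
  define P :: "'a poly" where "P = (\<Sum>i<m. Polynomial.monom 1 (p ^ i))"
  have pv: "poly P v = Tr v" for v by (simp add: P_def poly_sum poly_monom trace_def)
  have inj: "inj (\<lambda>i::nat. p ^ i)" using p_gt2 by (auto simp: inj_on_def power_inject_exp)
  have p1: "1 < p" using p_gt2 by simp
  have "Polynomial.coeff P (p ^ (m - 1)) = (\<Sum>i<m. if i = m - 1 then 1 else 0)"
    using p1 by (simp add: P_def Polynomial.coeff_sum Polynomial.coeff_monom power_inject_exp eq_commute)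
  also have "\<dots> = 1" using m_pos by (subst sum.delta) auto
  finally have "Polynomial.coeff P (p ^ (m - 1)) = 1" .
  hence "P \<noteq> 0" by auto
  have "degree P \<le> p ^ (m - 1)" unfolding P_def
    by (rule degree_sum_le) (use m_pos p_gt2 in \<open>auto simp: degree_monom_eq\<close>)
  moreover have "card {x. poly P x = 0} \<le> degree P" by (rule card_poly_roots_bound[OF \<open>P \<noteq> 0\<close>])
  moreover have "{x. poly P x = 0} = UNIV" using pv all0 by auto
  ultimately have "p ^ m \<le> p ^ (m - 1)" using card_a by simp
  moreover have "p ^ (m - 1) < p ^ m" using m_pos p_gt2 by (intro power_strict_increasing) auto
  ultimately show False by simp
qed

lemma ep_add: "ep p (a + b) = ep p a * ep p b"
  by (simp add: ep_def cis_mult distrib_left add_divide_distrib)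

lemma ep_mult_p: "ep p (int p * j) = 1"
proof -
  have "2 * pi * of_int (int p * j) / of_nat p = 2 * pi * of_int j" using p_gt2 by simp
  thus ?thesis unfolding ep_def by simp
qed

lemma ep_mod: "ep p (a mod int p) = ep p a"
proof -
  have "ep p a = ep p (a mod int p + int p * (a div int p))" by simp
  also have "\<dots> = ep p (a mod int p)" by (simp only: ep_add ep_mult_p) simp
  finally show ?thesis by simp
qed

lemma ep_cong: "a mod int p = b mod int p \<Longrightarrow> ep p a = ep p b"
  by (metis ep_mod)

lemma ep_0: "ep p 0 = 1" by (simp add: ep_def)

lemma norm_ep: "norm (ep p k) = 1" by (simp add: ep_def)

lemma cnj_ep: "cnj (ep p k) = ep p (- k)" by (simp add: ep_def cis_cnj)

lemma ep_eq_1: "ep p k = 1 \<longleftrightarrow> int p dvd k"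
proof
  assume "int p dvd k" then obtain j where "k = int p * j" by auto
  thus "ep p k = 1" using ep_mult_p by simp
next
  assume "ep p k = 1"
  hence "cos (2 * pi * of_int k / of_nat p) = 1" unfolding ep_def
    by (metis cis.sel(1) one_complex.sel(1))
  then obtain n :: int where n: "2 * pi * of_int k / of_nat p = of_int n * 2 * pi"
    using cos_one_2pi_int by blast
  hence "of_int k = real p * n" using p_gt2 by (simp add: field_simps)
  hence "real_of_int k = real_of_int (int p * n)" by simp
  hence "k = int p * n" by (simp only: Int.of_int_eq_iff)
  thus "int p dvd k" by simp
qed

definition e :: "'a \<Rightarrow> complex" where "e y = ep p (tr p m y)"

lemma e_of_int: "Tr y = of_int k \<Longrightarrow> e y = ep p k"
  unfolding e_def by (rule ep_cong) (metis of_int_eq_iff_mod of_int_tr)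

lemma e_add: "e (x + y) = e x * e y"
proof -
  have "Tr (x + y) = of_int (tr p m x + tr p m y)" by (simp add: trace_add of_int_tr)
  hence "e (x + y) = ep p (tr p m x + tr p m y)" by (rule e_of_int)
  thus ?thesis by (simp add: ep_add e_def)
qed

lemma e_0: "e 0 = 1" using e_of_int[of 0 0] trace_0 ep_0 by simp

lemma e_neg: "e (- x) = cnj (e x)"
proof -
  have "Tr (- x) = of_int (- tr p m x)" by (simp add: trace_neg of_int_tr)
  hence "e (- x) = ep p (- tr p m x)" by (rule e_of_int)
  thus ?thesis by (simp add: cnj_ep e_def)
qed

lemma sum_shift: "(\<Sum>x\<in>UNIV. f (x + c)) = (\<Sum>x\<in>UNIV. (f::'a \<Rightarrow> 'b::comm_monoid_add) x)"
  by (rule sum.reindex_bij_witness[of _ "\<lambda>x. x - c" "\<lambda>x. x + c"]) auto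

lemma sum_scale: "c \<noteq> 0 \<Longrightarrow> (\<Sum>x\<in>UNIV. f (c * x)) = (\<Sum>x\<in>UNIV. (f::'a \<Rightarrow> 'b::comm_monoid_add) x)"
  by (rule sum.reindex_bij_witness[of _ "\<lambda>x. x / c" "\<lambda>x. c * x"]) auto

lemma char_sum: "(\<Sum>y\<in>UNIV. e (u * y)) = (if u = 0 then of_nat CARD('a) else 0)"
proof (cases "u = 0")
  case True thus ?thesis by (simp add: e_0)
next
  case False
  obtain v where v: "Tr v \<noteq> 0" using trace_nonzero by blast
  have "e v \<noteq> 1"
  proof
    assume "e v = 1"
    hence "int p dvd tr p m v" by (simp add: e_def ep_eq_1)
    hence "Tr v = 0" using of_int_tr[of v] of_int_eq_iff_mod[of "tr p m v" 0] by simp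
    thus False using v by simp
  qed
  let ?S = "\<Sum>y\<in>UNIV. e (u * y)"
  have "?S = (\<Sum>y\<in>UNIV. e (u * (y + v / u)))" by (rule sum_shift[symmetric])
  also have "\<dots> = (\<Sum>y\<in>UNIV. e v * e (u * y))"
    using False by (intro sum.cong) (auto simp: distrib_left e_add)
  also have "\<dots> = e v * ?S" by (simp add: sum_distrib_left)
  finally have "(1 - e v) * ?S = 0" by (simp add: algebra_simps)
  thus ?thesis using False \<open>e v \<noteq> 1\<close> by simp
qed

lemma periodic_shift:
  assumes "\<And>x. g (x mod int p) = g x"
  shows "(\<Sum>y\<in>{0..<int p}. g (y + A)) = (\<Sum>y\<in>{0..<int p}. (g::int \<Rightarrow> 'b::comm_monoid_add) y)"
proof -
  have "(\<Sum>y\<in>{0..<int p}. g (y + A)) = (\<Sum>y\<in>{0..<int p}. g ((y + A) mod int p))"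
    using assms by simp
  also have "\<dots> = (\<Sum>y\<in>{0..<int p}. g y)"
    using p_gt2
    by (intro sum.reindex_bij_witness[of _ "\<lambda>y. (y - A) mod int p" "\<lambda>y. (y + A) mod int p"])
       (auto simp: mod_add_left_eq mod_diff_left_eq mod_pos_pos_trivial)
  finally show ?thesis .
qed

lemma ep_sum: "(\<Sum>z\<in>{0..<int p}. ep p (k * z)) = (if int p dvd k then of_nat p else 0)"
proof (cases "int p dvd k")
  case True
  then obtain j where "k = int p * j" by auto
  hence "ep p (k * z) = 1" for z using ep_mult_p[of "j * z"] by (simp add: mult.assoc)
  thus ?thesis using True by simp
next
  case False
  let ?S = "\<Sum>z\<in>{0..<int p}. ep p (k * z)"
  have "?S = (\<Sum>z\<in>{0..<int p}. ep p (k * (z + 1)))"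
    by (rule periodic_shift[symmetric]) (metis ep_mod mod_mult_right_eq)
  also have "\<dots> = ep p k * ?S" by (simp add: distrib_left ep_add sum_distrib_left mult.commute)
  finally have "(1 - ep p k) * ?S = 0" by (simp add: algebra_simps)
  thus ?thesis using False ep_eq_1[of k] by simp
qed

end




context ffp
begin

definition G :: "'a \<Rightarrow> complex" where "G c = (\<Sum>x\<in>UNIV. e (c * x ^ 2))"

lemma two_ne0: "(2::'a) \<noteq> 0"
proof
  assume "(2::'a) = 0"
  hence "(of_nat 2::'a) = 0" by simp
  hence "p dvd 2" using of_nat_eq_0_iff_char_dvd[where 'a='a] CHAR_a by metis
  thus False using p_gt2 by (simp add: nat_dvd_not_less)
qed

lemma G_norm:
  assumes c: "c \<noteq> 0"
  shows "G c * cnj (G c) = of_nat CARD('a)"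
proof -
  have "G c * cnj (G c) = (\<Sum>x\<in>UNIV. e (c * x ^ 2)) * (\<Sum>y\<in>UNIV. e (- (c * y ^ 2)))"
    by (simp add: G_def cnj_sum e_neg)
  also have "\<dots> = (\<Sum>y\<in>UNIV. \<Sum>x\<in>UNIV. e (c * x ^ 2) * e (- (c * y ^ 2)))"
    by (subst sum_product) (rule sum.swap)
  also have "\<dots> = (\<Sum>y\<in>UNIV. \<Sum>x\<in>UNIV. e (c * x ^ 2) * e ((2 * c * x) * y))"
  proof (rule sum.cong[OF refl])
    fix y
    have "(\<Sum>x\<in>UNIV. e (c * x ^ 2) * e (- (c * y ^ 2))) =
          (\<Sum>x\<in>UNIV. e (c * (x + y) ^ 2) * e (- (c * y ^ 2)))"
      by (rule sum_shift[where f = "\<lambda>x. e (c * x ^ 2) * e (- (c * y ^ 2))", symmetric])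
    also have "\<dots> = (\<Sum>x\<in>UNIV. e (c * x ^ 2) * e ((2 * c * x) * y))"
    proof (rule sum.cong[OF refl])
      fix x
      have "c * (x + y) ^ 2 + - (c * y ^ 2) = c * x ^ 2 + (2 * c * x) * y"
        by (simp add: power2_eq_square algebra_simps)
      hence "e (c * (x + y) ^ 2) * e (- (c * y ^ 2)) = e (c * x ^ 2 + (2 * c * x) * y)"
        by (metis e_add)
      thus "e (c * (x + y) ^ 2) * e (- (c * y ^ 2)) = e (c * x ^ 2) * e ((2 * c * x) * y)"
        by (simp add: e_add)
    qed
    finally show "(\<Sum>x\<in>UNIV. e (c * x ^ 2) * e (- (c * y ^ 2))) =
          (\<Sum>x\<in>UNIV. e (c * x ^ 2) * e ((2 * c * x) * y))" .
  qed
  also have "\<dots> = (\<Sum>x\<in>UNIV. e (c * x ^ 2) * (\<Sum>y\<in>UNIV. e ((2 * c * x) * y)))"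
    by (subst sum.swap) (simp add: sum_distrib_left)
  also have "\<dots> = (\<Sum>x::'a\<in>UNIV. if x = 0 then of_nat CARD('a) else 0)"
    using c two_ne0 by (intro sum.cong[OF refl]) (simp add: char_sum e_0)
  also have "\<dots> = of_nat CARD('a)" by simp
  finally show ?thesis .
qed

lemma G_scale:
  assumes d: "d \<noteq> 0"
  shows "G (d ^ 2 * c) = G c"
proof -
  have "G c = (\<Sum>x\<in>UNIV. e (c * (d * x) ^ 2))"
    unfolding G_def by (rule sum_scale[OF d, where f = "\<lambda>x. e (c * x ^ 2)", symmetric])
  also have "\<dots> = G (d ^ 2 * c)"
    unfolding G_def by (intro sum.cong) (simp_all add: power_mult_distrib mult_ac)
  finally show ?thesis by simp
qed

lemma G_0: "G 0 = of_nat CARD('a)" by (simp add: G_def e_0)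

lemma sum_G: "(\<Sum>c\<in>UNIV. G c) = of_nat CARD('a)"
proof -
  have "(\<Sum>c\<in>UNIV. G c) = (\<Sum>x\<in>UNIV. \<Sum>c\<in>UNIV. e (x ^ 2 * c))"
    unfolding G_def by (subst sum.swap) (simp add: mult.commute)
  also have "\<dots> = (\<Sum>x::'a\<in>UNIV. if x = 0 then of_nat CARD('a) else 0)"
    by (intro sum.cong[OF refl]) (simp add: char_sum)
  also have "\<dots> = of_nat CARD('a)" by simp
  finally show ?thesis .
qed

definition Sq :: "'a set" where "Sq = {x. x \<noteq> 0 \<and> (\<exists>y. x = y ^ 2)}"
definition Nq :: "'a set" where "Nq = {x. x \<noteq> 0 \<and> \<not> (\<exists>y. x = y ^ 2)}"

lemma sq_fiber:
  assumes "r \<noteq> 0" shows "card {y::'a. y ^ 2 = r ^ 2} = 2"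
proof -
  have "{y::'a. y ^ 2 = r ^ 2} = {r, -r}" by (auto simp: power2_eq_iff)
  moreover have "r \<noteq> - r"
  proof
    assume "r = - r" hence "2 * r = 0" by (metis add_eq_0_iff2 mult_2)
    thus False using assms two_ne0 by simp
  qed
  ultimately show ?thesis by simp
qed

lemma card_Sq: "2 * card Sq = CARD('a) - 1"
proof -
  have "UNIV - {0} = (\<Union>s\<in>Sq. {y::'a. y ^ 2 = s})" by (auto simp: Sq_def)
  hence "card (UNIV - {0::'a}) = card (\<Union>s\<in>Sq. {y::'a. y ^ 2 = s})" by simp
  also have "\<dots> = (\<Sum>s\<in>Sq. card {y::'a. y ^ 2 = s})"
    by (rule card_UN_disjoint) auto
  also have "\<dots> = (\<Sum>s\<in>Sq. 2)"
    by (intro sum.cong[OF refl]) (auto simp: Sq_def sq_fiber)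
  finally have "card (UNIV - {0::'a}) = 2 * card Sq" by simp
  moreover have "card (UNIV - {0::'a}) = CARD('a) - 1" by (simp add: card_Diff_singleton)
  ultimately show ?thesis by simp
qed

lemma card_Nq: "card Nq = card Sq"
proof -
  have "Nq = (UNIV - {0}) - Sq" by (auto simp: Sq_def Nq_def)
  moreover have "card ((UNIV - {0::'a}) - Sq) = card (UNIV - {0::'a}) - card Sq"
    by (rule card_Diff_subset) (auto simp: Sq_def)
  ultimately have "card Nq = card (UNIV - {0::'a}) - card Sq" by simp
  moreover have "card (UNIV - {0::'a}) = CARD('a) - 1" by (simp add: card_Diff_singleton)
  ultimately show ?thesis using card_Sq by simp
qed

lemma sq_quot: fixes r :: 'a assumes "x = r ^ 2" "r \<noteq> 0" "x * y = t ^ 2" shows "y = (t / r) ^ 2"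
proof -
  have "(t / r) ^ 2 = t ^ 2 / r ^ 2" by (simp add: power_divide)
  also have "\<dots> = (r ^ 2 * y) / r ^ 2" using assms by simp
  also have "\<dots> = y" using assms(2) by simp
  finally show ?thesis by simp
qed

lemma Nq_eq: assumes n: "n \<in> Nq" shows "Nq = (\<lambda>s. n * s) ` Sq"
proof -
  have sub: "(\<lambda>s. n * s) ` Sq \<subseteq> Nq"
  proof
    fix z assume "z \<in> (\<lambda>s. n * s) ` Sq"
    then obtain s where s0: "s \<in> Sq" "z = n * s" by auto
    then obtain r where "s = r ^ 2" by (auto simp: Sq_def)
    hence s: "z = n * s" "s = r ^ 2" "s \<noteq> 0" using s0 by (auto simp: Sq_def)
    have "r \<noteq> 0" using s by auto
    have "\<not> (\<exists>t. z = t ^ 2)"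
    proof
      assume "\<exists>t. z = t ^ 2"
      then obtain t where "s * n = t ^ 2" using s by (auto simp: mult.commute)
      hence "n = (t / r) ^ 2" using sq_quot[OF s(2) \<open>r \<noteq> 0\<close>] by blast
      thus False using n by (auto simp: Nq_def)
    qed
    thus "z \<in> Nq" using s n by (auto simp: Nq_def)
  qed
  have "inj_on (\<lambda>s. n * s) Sq" using n by (auto simp: inj_on_def Nq_def)
  hence "card ((\<lambda>s. n * s) ` Sq) = card Nq" by (simp add: card_image card_Nq)
  thus ?thesis using sub by (intro card_subset_eq[symmetric]) auto
qed

lemma qchar_sq: "x \<noteq> 0 \<Longrightarrow> qchar (x ^ 2 :: 'a) = 1"
  by (auto simp: qchar_def)

lemma qchar_mult: "qchar ((x::'a) * y) = qchar x * qchar y"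
proof (cases "x = 0 \<or> y = 0")
  case True thus ?thesis by (auto simp: qchar_def)
next
  case False
  hence x: "x \<noteq> 0" and y: "y \<noteq> 0" by auto
  have nsq: "\<not> (\<exists>t. a * b = t ^ 2)" if "a = r ^ 2" "r \<noteq> 0" "\<not> (\<exists>t. b = t ^ 2)" for a b r :: 'a
    using sq_quot[OF that(1,2)] that(3) by blast
  show ?thesis
  proof (cases "\<exists>t. x = t ^ 2")
    case tx: True
    then obtain r where r: "x = r ^ 2" by blast
    hence "r \<noteq> 0" using x by auto
    show ?thesis
    proof (cases "\<exists>t. y = t ^ 2")
      case True
      then obtain s where "y = s ^ 2" by blast
      hence "x * y = (r * s) ^ 2" using r by (simp add: power_mult_distrib)
      hence "\<exists>t. x * y = t ^ 2" by blast
      thus ?thesis using x y tx True by (simp add: qchar_def)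
    next
      case False
      have "\<not> (\<exists>t. x * y = t ^ 2)" using nsq[OF r \<open>r \<noteq> 0\<close> False] by simp
      thus ?thesis using x y tx False by (simp add: qchar_def)
    qed
  next
    case nx: False
    show ?thesis
    proof (cases "\<exists>t. y = t ^ 2")
      case True
      then obtain r where r: "y = r ^ 2" by blast
      hence "r \<noteq> 0" using y by auto
      have "\<not> (\<exists>t. x * y = t ^ 2)" using nsq[OF r \<open>r \<noteq> 0\<close> nx] by (simp add: mult.commute)
      thus ?thesis using x y True nx by (simp add: qchar_def)
    next
      case False
      hence "y \<in> Nq" using y by (auto simp: Nq_def)
      moreover have "x \<in> Nq" using x nx by (auto simp: Nq_def)
      ultimately obtain s where "s \<in> Sq" "y = x * s" using Nq_eq by blast
      then obtain r where "y = x * r ^ 2" by (auto simp: Sq_def)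
      hence "x * y = (x * r) ^ 2" by (simp add: power2_eq_square)
      hence "\<exists>t. x * y = t ^ 2" by blast
      thus ?thesis using x y nx False by (simp add: qchar_def)
    qed
  qed
qed

lemma qchar_pm1: "x \<noteq> 0 \<Longrightarrow> qchar (x::'a) = 1 \<or> qchar x = -1"
  by (auto simp: qchar_def)

lemma G_nonsq: assumes n: "n \<in> Nq" shows "G n = - G 1"
proof -
  have disj: "UNIV = insert 0 (Sq \<union> Nq)" "0 \<notin> Sq \<union> Nq" "Sq \<inter> Nq = {}"
    by (auto simp: Sq_def Nq_def)
  have "(\<Sum>c\<in>UNIV. G c) = (\<Sum>c\<in>insert 0 (Sq \<union> Nq). G c)"
    by (simp add: disj(1)[symmetric])
  also have "\<dots> = G 0 + (\<Sum>c\<in>Sq \<union> Nq. G c)" using disj(2) by (simp add: sum.insert)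
  also have "(\<Sum>c\<in>Sq \<union> Nq. G c) = (\<Sum>c\<in>Sq. G c) + (\<Sum>c\<in>Nq. G c)"
    by (rule sum.union_disjoint) (use disj(3) in auto)
  finally have "(\<Sum>c\<in>UNIV. G c) = G 0 + (\<Sum>c\<in>Sq. G c) + (\<Sum>c\<in>Nq. G c)"
    by (simp add: add.assoc)
  moreover have "(\<Sum>c\<in>Sq. G c) = (\<Sum>c\<in>Sq. G 1)"
  proof (intro sum.cong[OF refl])
    fix c assume "c \<in> Sq"
    then obtain r where "c = r ^ 2" "r \<noteq> 0" by (auto simp: Sq_def)
    thus "G c = G 1" using G_scale[of r 1] by simp
  qed
  moreover have "(\<Sum>c\<in>Nq. G c) = (\<Sum>c\<in>Nq. G n)"
  proof (intro sum.cong[OF refl])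
    fix c assume "c \<in> Nq"
    then obtain s where "s \<in> Sq" "c = n * s" using Nq_eq[OF n] by blast
    then obtain r where "s = r ^ 2" "r \<noteq> 0" by (auto simp: Sq_def)
    hence "c = r ^ 2 * n" "r \<noteq> 0" using \<open>c = n * s\<close> by (auto simp: mult.commute)
    thus "G c = G n" using G_scale[of r n] by simp
  qed
  ultimately have "of_nat (card Sq) * (G 1 + G n) = 0"
    using sum_G G_0 card_Nq by (simp add: algebra_simps)
  moreover have "card Sq \<noteq> 0"
  proof -
    have "(1::'a) \<in> Sq" by (auto simp: Sq_def intro: exI[of _ 1])
    thus ?thesis by (metis card_0_eq empty_iff finite)
  qed
  ultimately show ?thesis by (simp add: add_eq_0_iff2)
qed

lemma G_qchar: assumes c: "c \<noteq> 0" shows "G c = of_int (qchar c) * G 1"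
proof (cases "\<exists>t. c = t ^ 2")
  case True
  then obtain r where "c = r ^ 2" by blast
  moreover have "r \<noteq> 0" using c calculation by auto
  ultimately show ?thesis using G_scale[of r 1] c True by (simp add: qchar_def)
next
  case False
  hence "c \<in> Nq" using c by (simp add: Nq_def)
  thus ?thesis using G_nonsq c False by (simp add: qchar_def)
qed

lemma G1_sq: "G 1 ^ 2 = of_int (qchar (-1::'a)) * of_nat CARD('a)"
proof -
  have "cnj (G 1) = G (-1)" by (simp add: G_def cnj_sum e_neg[symmetric])
  hence "G 1 * G (-1) = of_nat CARD('a)" using G_norm[of 1] by simp
  hence "of_int (qchar (-1::'a)) * G 1 ^ 2 = of_nat CARD('a)"
    using G_qchar[of "-1"] by (simp add: power2_eq_square mult_ac)
  moreover have "of_int (qchar (-1::'a)) * of_int (qchar (-1::'a)) = (1::complex)"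
    using qchar_pm1[of "-1::'a"] by auto
  ultimately show ?thesis by (metis mult.assoc mult_1)
qed

lemma G1_form: "\<exists>z\<in>{1, -1, \<i>, -\<i>}. G 1 = z * complex_of_real (sqrt (real p) ^ m)"
proof -
  define s where "s = complex_of_real (sqrt (real p) ^ m)"
  have s2: "s ^ 2 = of_nat CARD('a)"
  proof -
    have "(sqrt (real p) ^ m) ^ 2 = (sqrt (real p) ^ 2) ^ m" by (metis power_mult mult.commute)
    also have "\<dots> = real p ^ m" by simp
    finally show ?thesis unfolding s_def card_a by (metis of_real_power of_real_of_nat_eq of_nat_power)
  qed
  have "s \<noteq> 0" unfolding s_def using p_gt2 by simp
  define z where "z = G 1 / s"
  have Gz: "G 1 = z * s" using \<open>s \<noteq> 0\<close> by (simp add: z_def)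
  have "z ^ 2 * s ^ 2 = of_int (qchar (-1::'a)) * s ^ 2"
    using G1_sq s2 Gz by (simp add: power_mult_distrib)
  hence z2: "z ^ 2 = of_int (qchar (-1::'a))" using \<open>s \<noteq> 0\<close> by simp
  have "z \<in> {1, -1, \<i>, -\<i>}"
  proof (cases "qchar (-1::'a) = 1")
    case True
    hence "z ^ 2 = 1" using z2 by simp
    thus ?thesis by (auto simp: power2_eq_1_iff)
  next
    case False
    hence "z ^ 2 = -1" using z2 qchar_pm1[of "-1::'a"] by simp
    hence "(z - \<i>) * (z + \<i>) = 0" by (simp add: algebra_simps power2_eq_square)
    thus ?thesis by (auto simp: eq_neg_iff_add_eq_0)
  qed
  thus ?thesis using Gz s_def by blast
qed

lemma quad_sum:
  assumes c: "c \<noteq> 0"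
  shows "(\<Sum>x\<in>UNIV. e (c * x ^ 2 - a * x)) = e (- (a ^ 2 / (4 * c))) * G c"
proof -
  have "(\<Sum>x\<in>UNIV. e (c * x ^ 2 - a * x)) = (\<Sum>x\<in>UNIV. e (c * (x + a / (2 * c)) ^ 2 - a * (x + a / (2 * c))))"
    by (rule sum_shift[where f = "\<lambda>x. e (c * x ^ 2 - a * x)", symmetric])
  also have "\<dots> = (\<Sum>x\<in>UNIV. e (- (a ^ 2 / (4 * c))) * e (c * x ^ 2))"
  proof (intro sum.cong[OF refl])
    fix x
    define h where "h = a / (2 * c)"
    have h2: "a = 2 * c * h" using c two_ne0 by (simp add: h_def)
    have four: "(4::'a) = 2 * 2" by simp
    have "(4::'a) \<noteq> 0" unfolding four using two_ne0 no_zero_divisors by blast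
    have e1: "c * (x + h) ^ 2 - a * (x + h) = c * x ^ 2 - c * h ^ 2"
      by (simp add: h2 power2_eq_square algebra_simps)
    have e2: "a ^ 2 / (4 * c) = c * h ^ 2"
      using c \<open>(4::'a) \<noteq> 0\<close> by (simp add: h2 power2_eq_square field_simps)
    have "c * (x + a / (2 * c)) ^ 2 - a * (x + a / (2 * c)) = - (a ^ 2 / (4 * c)) + c * x ^ 2"
      using e1 e2 unfolding h_def by simp
    thus "e (c * (x + a / (2 * c)) ^ 2 - a * (x + a / (2 * c))) = e (- (a ^ 2 / (4 * c))) * e (c * x ^ 2)"
      by (metis e_add)
  qed
  also have "\<dots> = e (- (a ^ 2 / (4 * c))) * G c" by (simp add: G_def sum_distrib_left)
  finally show ?thesis .
qed

end




context ffp
begin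

lemma ep_pow: "ep p a ^ n = ep p (int n * a)"
  by (induction n) (simp_all add: ep_0 ep_add distrib_right)

lemma tr_0: "tr p m (0::'a) = 0"
proof -
  have "(of_int (tr p m (0::'a)) :: 'a) = of_int 0" using of_int_tr[of 0] trace_0 by simp
  hence "tr p m (0::'a) mod int p = 0" using of_int_eq_iff_mod[of "tr p m (0::'a)" 0] by simp
  thus ?thesis using tr_prop[of "0::'a"] by (simp add: mod_pos_pos_trivial)
qed

lemma ep_shift: "ep p (u + int p * j) = ep p u"
  by (simp add: ep_add ep_mult_p)

lemma zmod: "z mod int p = z + int p * (- (z div int p))"
  using minus_mult_div_eq_mod[of z "int p"] by simp

lemma sum_Vsp: "(\<Sum>v\<in>(Vsp p :: ('a \<times> int \<times> int) set). f v) =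
  (\<Sum>x\<in>UNIV. \<Sum>y1\<in>{0..<int p}. \<Sum>y2\<in>{0..<int p}. f (x, y1, y2))"
  unfolding Vsp_def by (simp add: sum.cartesian_product)

lemma inner_sum:
  assumes b1: "b1 \<in> {0..<int p}"
  shows "(\<Sum>y1\<in>{0..<int p}. \<Sum>y2\<in>{0..<int p}. ep p (T0 + (y1 + A) * (y2 + B) - b1 * y1 - b2 * y2))
       = of_nat p * ep p (T0 + b1 * A + b2 * B - b1 * b2)"
proof -
  define h where "h z1 z2 = ep p (T0 + z1 * z2 - b1 * z1 - b2 * z2 + b1 * A + b2 * B)" for z1 z2
  have aux1: "T0 + r * z2 - b1 * r - b2 * z2 + b1 * A + b2 * B = (T0 + (r + int p * d) * z2 - b1 * (r + int p * d) - b2 * z2 + b1 * A + b2 * B) + int p * (- d * (z2 - b1))" for r d z2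
    by (simp add: algebra_simps)
  have aux2: "T0 + z1 * r - b1 * z1 - b2 * r + b1 * A + b2 * B = (T0 + z1 * (r + int p * d) - b1 * z1 - b2 * (r + int p * d) + b1 * A + b2 * B) + int p * (- d * (z1 - b2))" for r d z1
    by (simp add: algebra_simps)
  have h1: "h (z1 mod int p) z2 = h z1 z2" for z1 z2
  proof -
    have "T0 + (z1 mod int p) * z2 - b1 * (z1 mod int p) - b2 * z2 + b1 * A + b2 * B
        = (T0 + z1 * z2 - b1 * z1 - b2 * z2 + b1 * A + b2 * B) + int p * (- (z1 div int p) * (z2 - b1))"
      using aux1[where r="z1 mod int p" and d="z1 div int p"] by (simp only: mod_mult_div_eq)
    thus ?thesis unfolding h_def by (simp only: ep_shift)
  qed
  have h2: "h z1 (z2 mod int p) = h z1 z2" for z1 z2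
  proof -
    have "T0 + z1 * (z2 mod int p) - b1 * z1 - b2 * (z2 mod int p) + b1 * A + b2 * B
        = (T0 + z1 * z2 - b1 * z1 - b2 * z2 + b1 * A + b2 * B) + int p * (- (z2 div int p) * (z1 - b2))"
      using aux2[where r="z2 mod int p" and d="z2 div int p"] by (simp only: mod_mult_div_eq)
    thus ?thesis unfolding h_def by (simp only: ep_shift)
  qed
  have "(\<Sum>y1\<in>{0..<int p}. \<Sum>y2\<in>{0..<int p}. ep p (T0 + (y1 + A) * (y2 + B) - b1 * y1 - b2 * y2))
      = (\<Sum>y1\<in>{0..<int p}. \<Sum>y2\<in>{0..<int p}. h (y1 + A) (y2 + B))"
    unfolding h_def by (intro sum.cong refl arg_cong[where f = "ep p"]) (simp add: algebra_simps)
  also have "\<dots> = (\<Sum>y1\<in>{0..<int p}. \<Sum>z2\<in>{0..<int p}. h (y1 + A) z2)"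
    by (intro sum.cong refl periodic_shift) (rule h2)
  also have "\<dots> = (\<Sum>z2\<in>{0..<int p}. \<Sum>y1\<in>{0..<int p}. h (y1 + A) z2)"
    by (rule sum.swap)
  also have "\<dots> = (\<Sum>z2\<in>{0..<int p}. \<Sum>z1\<in>{0..<int p}. h z1 z2)"
    by (intro sum.cong refl periodic_shift) (rule h1)
  also have "\<dots> = (\<Sum>z2\<in>{0..<int p}. ep p (T0 + b1 * A + b2 * B - b2 * z2) *
                       (\<Sum>z1\<in>{0..<int p}. ep p ((z2 - b1) * z1)))"
    unfolding h_def sum_distrib_left
    by (intro sum.cong refl) (simp add: ep_add[symmetric] algebra_simps)
  also have "\<dots> = (\<Sum>z2\<in>{0..<int p}. if z2 = b1 then of_nat p * ep p (T0 + b1 * A + b2 * B - b2 * b1) else 0)"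
  proof (intro sum.cong refl)
    fix z2 assume z2: "z2 \<in> {0..<int p}"
    have "int p dvd (z2 - b1) \<longleftrightarrow> z2 = b1"
    proof
      assume "int p dvd (z2 - b1)"
      hence "z2 mod int p = b1 mod int p" by (simp add: mod_eq_dvd_iff)
      thus "z2 = b1" using z2 b1 by (simp add: mod_pos_pos_trivial)
    qed simp
    thus "ep p (T0 + b1 * A + b2 * B - b2 * z2) * (\<Sum>z1\<in>{0..<int p}. ep p ((z2 - b1) * z1)) =
          (if z2 = b1 then of_nat p * ep p (T0 + b1 * A + b2 * B - b2 * b1) else 0)"
      by (simp add: ep_sum)
  qed
  also have "\<dots> = of_nat p * ep p (T0 + b1 * A + b2 * B - b1 * b2)"
    using b1 by (simp add: mult.commute)
  finally show ?thesis .
qed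

lemma ep_mod_diff: "ep p (X mod int p - Y mod int p) = ep p (X - Y)"
  by (rule ep_cong) (simp add: mod_diff_eq)

lemma e_quad:
  fixes \<alpha> \<beta> :: 'a
  assumes "c = 1 + of_int b1 * \<alpha> + of_int b2 * \<beta>"
  shows "e (c * x ^ 2 - a * x) = ep p (tr p m (x ^ 2) + b1 * tr p m (\<alpha> * x ^ 2) + b2 * tr p m (\<beta> * x ^ 2) - tr p m (a * x))"
proof (rule e_of_int)
  have "c * x ^ 2 - a * x = x ^ 2 + of_int b1 * (\<alpha> * x ^ 2) + of_int b2 * (\<beta> * x ^ 2) - a * x"
    using assms by (simp add: algebra_simps)
  hence "Tr (c * x ^ 2 - a * x) = Tr (x ^ 2) + of_int b1 * Tr (\<alpha> * x ^ 2) + of_int b2 * Tr (\<beta> * x ^ 2) - Tr (a * x)"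
    by (simp add: trace_add trace_diff trace_of_int_mult)
  thus "Tr (c * x ^ 2 - a * x) = of_int (tr p m (x ^ 2) + b1 * tr p m (\<alpha> * x ^ 2) + b2 * tr p m (\<beta> * x ^ 2) - tr p m (a * x))"
    by (simp add: of_int_tr)
qed

lemma walsh_F:
  fixes \<alpha> \<beta> :: 'a
  assumes b1: "b1 \<in> {0..<int p}" and cdef: "c = 1 + of_int b1 * \<alpha> + of_int b2 * \<beta>" and c: "c \<noteq> 0"
  shows "walsh p m (\<lambda>(x, y1, y2). (tr p m (x ^ 2)
              + (y1 + tr p m (\<alpha> * x ^ 2)) * (y2 + tr p m (\<beta> * x ^ 2))) mod int p) (a, b1, b2)
    = of_nat p * ep p (- (b1 * b2)) * (e (- (a ^ 2 / (4 * c))) * G c)"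
proof -
  let ?F = "\<lambda>(x, y1, y2). (tr p m (x ^ 2)
              + (y1 + tr p m (\<alpha> * x ^ 2)) * (y2 + tr p m (\<beta> * x ^ 2))) mod int p"
  have "walsh p m ?F (a, b1, b2) = (\<Sum>x\<in>UNIV. \<Sum>y1\<in>{0..<int p}. \<Sum>y2\<in>{0..<int p}.
      ep p ((tr p m (x ^ 2) - tr p m (a * x)) + (y1 + tr p m (\<alpha> * x ^ 2)) * (y2 + tr p m (\<beta> * x ^ 2)) - b1 * y1 - b2 * y2))"
    unfolding walsh_def sum_Vsp
    by (intro sum.cong refl) (simp add: ip_def ep_mod_diff algebra_simps)
  also have "\<dots> = (\<Sum>x\<in>UNIV. of_nat p * ep p ((tr p m (x ^ 2) - tr p m (a * x)) + b1 * tr p m (\<alpha> * x ^ 2) + b2 * tr p m (\<beta> * x ^ 2) - b1 * b2))"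
    by (intro sum.cong refl inner_sum b1)
  also have "\<dots> = (\<Sum>x\<in>UNIV. of_nat p * ep p (- (b1 * b2)) * e (c * x ^ 2 - a * x))"
  proof (intro sum.cong refl)
    fix x
    have "ep p (- (b1 * b2)) * e (c * x ^ 2 - a * x) = ep p (- (b1 * b2) + (tr p m (x ^ 2) + b1 * tr p m (\<alpha> * x ^ 2) + b2 * tr p m (\<beta> * x ^ 2) - tr p m (a * x)))"
      by (simp only: e_quad[OF cdef] ep_add)
    also have "\<dots> = ep p ((tr p m (x ^ 2) - tr p m (a * x)) + b1 * tr p m (\<alpha> * x ^ 2) + b2 * tr p m (\<beta> * x ^ 2) - b1 * b2)"
      by (rule arg_cong[where f = "ep p"]) (simp add: algebra_simps)
    finally have eq: "ep p (- (b1 * b2)) * e (c * x ^ 2 - a * x) = ep p ((tr p m (x ^ 2) - tr p m (a * x)) + b1 * tr p m (\<alpha> * x ^ 2) + b2 * tr p m (\<beta> * x ^ 2) - b1 * b2)" .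
    show "of_nat p * ep p ((tr p m (x ^ 2) - tr p m (a * x)) + b1 * tr p m (\<alpha> * x ^ 2) + b2 * tr p m (\<beta> * x ^ 2) - b1 * b2) = of_nat p * ep p (- (b1 * b2)) * e (c * x ^ 2 - a * x)"
      by (simp only: mult.assoc eq)
  qed
  also have "\<dots> = of_nat p * ep p (- (b1 * b2)) * (\<Sum>x\<in>UNIV. e (c * x ^ 2 - a * x))"
    by (simp add: sum_distrib_left)
  also have "\<dots> = of_nat p * ep p (- (b1 * b2)) * (e (- (a ^ 2 / (4 * c))) * G c)"
    by (simp add: quad_sum[OF c])
  finally show ?thesis .
qed

end




context ffp
begin

lemma z4: "z \<in> {1, -1, \<i>, -\<i>} \<Longrightarrow> z ^ 4 = (1::complex)"
proof -
  have "\<i> ^ 4 = (1::complex)" by (simp add: power4_eq_xxxx)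
  thus "z \<in> {1, -1, \<i>, -\<i>} \<Longrightarrow> z ^ 4 = (1::complex)" by (auto simp: power4_eq_xxxx)
qed

lemma znz: "z \<in> {1, -1, \<i>, -\<i>} \<Longrightarrow> z \<noteq> (0::complex)" by auto

lemma dual_unique:
  assumes z: "z \<in> {1, -1, \<i>, -\<i>}" and z': "z' \<in> {1, -1, \<i>, -\<i>}"
    and k: "k \<in> {0..<int p}" and k': "k' \<in> {0..<int p}" and S: "S \<noteq> 0"
    and eq: "z * S * ep p k = z' * S * ep p k'"
  shows "k = k'"
proof -
  define u where "u = ep p (k - k')"
  have epk: "ep p k = u * ep p k'" unfolding u_def by (simp add: ep_add[symmetric])
  have "ep p k' \<noteq> 0" using norm_ep[of k'] by auto
  hence zu: "z * u = z'" using eq S epk by (simp add: mult_ac)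
  have "(z * u) ^ 4 = z' ^ 4" using zu by simp
  hence "z ^ 4 * u ^ 4 = z' ^ 4" by (simp only: power_mult_distrib)
  hence u4: "u ^ 4 = 1" using z4[OF z] z4[OF z'] by simp
  have up: "u ^ p = 1" unfolding u_def ep_pow by (simp add: ep_mult_p)
  have pd: "p = 4 * (p div 4) + p mod 4" by simp
  have "u ^ p = u ^ (4 * (p div 4) + p mod 4)" by (subst pd) (rule refl)
  also have "\<dots> = (u ^ 4) ^ (p div 4) * u ^ (p mod 4)" by (simp only: power_add power_mult)
  finally have "u ^ p = (u ^ 4) ^ (p div 4) * u ^ (p mod 4)" .
  hence um: "u ^ (p mod 4) = 1" using u4 up by simp
  have "p mod 4 = 1 \<or> p mod 4 = 3" using p_odd by presburger
  hence "u = 1"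
  proof
    assume "p mod 4 = 1" thus "u = 1" using um by simp
  next
    assume "p mod 4 = 3"
    hence "u ^ 3 = 1" using um by simp
    moreover have "u ^ 4 = u * u ^ 3" by (simp add: power_Suc[symmetric] del: power_Suc)
    ultimately show "u = 1" using u4 by simp
  qed
  hence "int p dvd (k - k')" unfolding u_def by (simp add: ep_eq_1)
  hence "k mod int p = k' mod int p" by (simp add: mod_eq_dvd_iff)
  thus ?thesis using k k' by (simp add: mod_pos_pos_trivial)
qed

lemma norm_e: "norm (e y) = 1" by (simp add: e_def norm_ep)

lemma sqrt_p2: "sqrt (real p) ^ (m + 2) = real p * sqrt (real p) ^ m"
  by (simp add: power_add)

lemma four_ne0: "(4::'a) \<noteq> 0"
proof -
  have four: "(4::'a) = 2 * 2" by simp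
  show ?thesis unfolding four using two_ne0 no_zero_divisors by blast
qed

lemma norm_zset: "z \<in> {1, -1, \<i>, -\<i>} \<Longrightarrow> norm (z::complex) = 1" by auto

lemma main:
  fixes \<alpha> \<beta> :: 'a
  assumes cnz: "\<And>b1 b2. b1 \<in> {0..<int p} \<Longrightarrow> b2 \<in> {0..<int p} \<Longrightarrow> 1 + of_int b1 * \<alpha> + of_int b2 * \<beta> \<noteq> 0"
    and hyp: "cmod (\<Sum>y1\<in>{0..<int p}. \<Sum>y2\<in>{0..<int p}.
           of_int (qchar (1 + of_int y1 * \<alpha> + of_int y2 * \<beta>)) * ep p (- (y1 * y2))) \<noteq> real p"
  shows "non_dual_bent p m
           (\<lambda>(x, y1, y2). (tr p m (x ^ 2)
              + (y1 + tr p m (\<alpha> * x ^ 2)) * (y2 + tr p m (\<beta> * x ^ 2))) mod int p)"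
proof -
  define F where "F = (\<lambda>(x, y1, y2). (tr p m (x ^ 2)
              + (y1 + tr p m (\<alpha> * x ^ 2)) * (y2 + tr p m (\<beta> * x ^ 2))) mod int p)"
  define cc where "cc b1 b2 = 1 + of_int b1 * \<alpha> + of_int b2 * \<beta>" for b1 b2
  obtain \<zeta> where \<zeta>: "\<zeta> \<in> {1, -1, \<i>, -\<i>}" "G 1 = \<zeta> * complex_of_real (sqrt (real p) ^ m)"
    using G1_form by blast
  define sm where "sm = sqrt (real p) ^ m"
  have sm_pos: "sm > 0" unfolding sm_def using p_gt2 by simp
  have normG1: "norm (G 1) = sm" using \<zeta> sm_pos norm_zset[OF \<zeta>(1)] by (simp add: norm_mult norm_power sm_def)
  define kk where "kk a b1 b2 = (- (b1 * b2) + tr p m (- (a ^ 2 / (4 * cc b1 b2)))) mod int p" for a b1 b2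
  have cnz': "cc b1 b2 \<noteq> 0" if "b1 \<in> {0..<int p}" "b2 \<in> {0..<int p}" for b1 b2
    using cnz[OF that] by (simp add: cc_def)
  have W: "walsh p m F (a, b1, b2) = (of_int (qchar (cc b1 b2)) * \<zeta>) * complex_of_real (sqrt (real p) ^ (m + 2)) * ep p (kk a b1 b2)"
    if b1: "b1 \<in> {0..<int p}" and b2: "b2 \<in> {0..<int p}" for a b1 b2
  proof -
    have c: "cc b1 b2 \<noteq> 0" using cnz' b1 b2 .
    have "walsh p m F (a, b1, b2) = of_nat p * ep p (- (b1 * b2)) * (e (- (a ^ 2 / (4 * cc b1 b2))) * G (cc b1 b2))"
      unfolding F_def by (rule walsh_F[OF b1 cc_def c])
    also have "G (cc b1 b2) = of_int (qchar (cc b1 b2)) * (\<zeta> * complex_of_real sm)"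
      using G_qchar[OF c] \<zeta>(2) sm_def by simp
    also have "ep p (- (b1 * b2)) * e (- (a ^ 2 / (4 * cc b1 b2))) = ep p (kk a b1 b2)"
      unfolding kk_def ep_mod by (simp only: ep_add e_def)
    moreover have "complex_of_real (sqrt (real p) ^ (m + 2)) = of_nat p * complex_of_real sm"
      unfolding sqrt_p2 sm_def by simp
    ultimately show ?thesis by (simp add: mult_ac)
  qed
  have kk_range: "kk a b1 b2 \<in> {0..<int p}" for a b1 b2 using p_gt2 by (simp add: kk_def)
  have zin: "of_int (qchar (cc b1 b2)) * \<zeta> \<in> {1, -1, \<i>, -\<i>}"
    if "b1 \<in> {0..<int p}" "b2 \<in> {0..<int p}" for b1 b2
  proof -
    have "qchar (cc b1 b2) = 1 \<or> qchar (cc b1 b2) = -1" using qchar_pm1 cnz'[OF that] by blast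
    thus ?thesis using \<zeta>(1) by auto
  qed
  have Vsp_iff: "(a, b1, b2) \<in> Vsp p \<longleftrightarrow> b1 \<in> {0..<int p} \<and> b2 \<in> {0..<int p}" for a :: 'a and b1 b2
    by (simp add: Vsp_def)
  have bentF: "bent p m F"
    unfolding bent_def
  proof (clarify)
    fix a b1 b2 assume "(a, b1, b2) \<in> (Vsp p :: ('a \<times> int \<times> int) set)"
    hence b: "b1 \<in> {0..<int p}" "b2 \<in> {0..<int p}" using Vsp_iff by blast+
    show "cmod (walsh p m F (a, b1, b2)) = sqrt (real p) ^ (m + 2)"
      using W[OF b] norm_zset[OF zin[OF b]] by (simp add: norm_mult norm_ep norm_power)
  qed
  have dualF: "dual p m F (a, b1, b2) = kk a b1 b2"
    if b: "b1 \<in> {0..<int p}" "b2 \<in> {0..<int p}" for a b1 b2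
    unfolding dual_def
  proof (rule the_equality)
    show "kk a b1 b2 \<in> {0..<int p} \<and> (\<exists>z\<in>{1, -1, \<i>, -\<i>}. walsh p m F (a, b1, b2) =
        z * complex_of_real (sqrt (real p) ^ (m + 2)) * ep p (kk a b1 b2))"
      using W[OF b] zin[OF b] kk_range by blast
  next
    fix k assume "k \<in> {0..<int p} \<and> (\<exists>z\<in>{1, -1, \<i>, -\<i>}. walsh p m F (a, b1, b2) =
        z * complex_of_real (sqrt (real p) ^ (m + 2)) * ep p k)"
    then obtain z where k: "k \<in> {0..<int p}" and z: "z \<in> {1, -1, \<i>, -\<i>}"
      and wz: "walsh p m F (a, b1, b2) = z * complex_of_real (sqrt (real p) ^ (m + 2)) * ep p k" by blast
    have nz: "complex_of_real (sqrt (real p) ^ (m + 2)) \<noteq> 0" using p_gt2 by simp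
    have eqz: "z * complex_of_real (sqrt (real p) ^ (m + 2)) * ep p k =
      (of_int (qchar (cc b1 b2)) * \<zeta>) * complex_of_real (sqrt (real p) ^ (m + 2)) * ep p (kk a b1 b2)"
      by (rule trans[OF wz[symmetric] W[OF b]])
    show "k = kk a b1 b2" by (rule dual_unique[OF z zin[OF b] k kk_range nz eqz])
  qed
  define S where "S = (\<Sum>y1\<in>{0..<int p}. \<Sum>y2\<in>{0..<int p}.
           of_int (qchar (1 + of_int y1 * \<alpha> + of_int y2 * \<beta>)) * ep p (- (y1 * y2)))"
  have qc: "qchar (- (1 / (4 * cc b1 b2))) = qchar (-1::'a) * qchar (cc b1 b2)"
    if b: "b1 \<in> {0..<int p}" "b2 \<in> {0..<int p}" for b1 b2
  proof -
    have c: "cc b1 b2 \<noteq> 0" using cnz'[OF b] .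
    have eq1: "- (1 / (4 * cc b1 b2)) = (-1) * (cc b1 b2 * (1 / (2 * cc b1 b2)) ^ 2)"
      using c two_ne0 by (simp add: power2_eq_square field_simps)
    have d: "1 / (2 * cc b1 b2) \<noteq> 0" using c two_ne0 by simp
    have "qchar (- (1 / (4 * cc b1 b2))) = qchar ((-1) * (cc b1 b2 * (1 / (2 * cc b1 b2)) ^ 2))"
      by (subst eq1) (rule refl)
    also have "\<dots> = qchar (-1::'a) * (qchar (cc b1 b2) * qchar ((1 / (2 * cc b1 b2)) ^ 2))"
      by (simp only: qchar_mult)
    also have "qchar ((1 / (2 * cc b1 b2)) ^ 2) = 1" by (rule qchar_sq[OF d])
    finally show ?thesis by simp
  qed
  have WD: "walsh p m (dual p m F) (0, 0, 0) = of_int (qchar (-1::'a)) * G 1 * S"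
  proof -
    have "walsh p m (dual p m F) (0, 0, 0) = (\<Sum>x\<in>UNIV. \<Sum>y1\<in>{0..<int p}. \<Sum>y2\<in>{0..<int p}.
        ep p (- (y1 * y2)) * e ((- (1 / (4 * cc y1 y2))) * x ^ 2))"
      unfolding walsh_def sum_Vsp
    proof (intro sum.cong refl)
      fix x :: 'a and y1 y2 assume y: "y1 \<in> {0..<int p}" "y2 \<in> {0..<int p}"
      have "ep p (dual p m F (x, y1, y2) - ip p m (0, 0, 0) (x, y1, y2)) = ep p (kk x y1 y2)"
        using dualF[OF y] by (simp add: ip_def tr_0)
      also have "\<dots> = ep p (- (y1 * y2)) * e (- (x ^ 2 / (4 * cc y1 y2)))"
        unfolding kk_def ep_mod by (simp only: ep_add e_def)
      also have "- (x ^ 2 / (4 * cc y1 y2)) = (- (1 / (4 * cc y1 y2))) * x ^ 2" by simp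
      finally show "ep p (dual p m F (x, y1, y2) - ip p m (0, 0, 0) (x, y1, y2)) =
          ep p (- (y1 * y2)) * e ((- (1 / (4 * cc y1 y2))) * x ^ 2)" .
    qed
    also have "\<dots> = (\<Sum>y1\<in>{0..<int p}. \<Sum>y2\<in>{0..<int p}. \<Sum>x\<in>UNIV.
        ep p (- (y1 * y2)) * e ((- (1 / (4 * cc y1 y2))) * x ^ 2))"
      by (subst sum.swap) (intro sum.cong refl sum.swap)
    also have "\<dots> = (\<Sum>y1\<in>{0..<int p}. \<Sum>y2\<in>{0..<int p}.
        ep p (- (y1 * y2)) * G (- (1 / (4 * cc y1 y2))))"
      by (simp add: G_def sum_distrib_left)
    also have "\<dots> = (\<Sum>y1\<in>{0..<int p}. \<Sum>y2\<in>{0..<int p}.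
        of_int (qchar (-1::'a)) * G 1 * (of_int (qchar (cc y1 y2)) * ep p (- (y1 * y2))))"
    proof (intro sum.cong refl)
      fix y1 y2 assume y: "y1 \<in> {0..<int p}" "y2 \<in> {0..<int p}"
      have nz: "- (1 / (4 * cc y1 y2)) \<noteq> 0" using cnz'[OF y] four_ne0 by simp
      have "G (- (1 / (4 * cc y1 y2))) = of_int (qchar (-1::'a)) * of_int (qchar (cc y1 y2)) * G 1"
        using G_qchar[OF nz] qc[OF y] by simp
      thus "ep p (- (y1 * y2)) * G (- (1 / (4 * cc y1 y2))) =
          of_int (qchar (-1::'a)) * G 1 * (of_int (qchar (cc y1 y2)) * ep p (- (y1 * y2)))"
        by (simp add: mult_ac)
    qed
    also have "\<dots> = of_int (qchar (-1::'a)) * G 1 * S"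
      by (simp add: S_def cc_def sum_distrib_left)
    finally show ?thesis .
  qed
  have "\<not> bent p m (dual p m F)"
  proof
    assume "bent p m (dual p m F)"
    moreover have "((0::'a), (0::int), (0::int)) \<in> Vsp p" using p_gt2 by (simp add: Vsp_def)
    ultimately have "cmod (walsh p m (dual p m F) (0, 0, 0)) = sqrt (real p) ^ (m + 2)"
      unfolding bent_def by blast
    moreover have "cmod (walsh p m (dual p m F) (0, 0, 0)) = sm * cmod S"
    proof -
      have "\<bar>qchar (-1::'a)\<bar> = 1" using qchar_pm1[of "-1::'a"] by auto
      moreover have "cmod (of_int (qchar (-1::'a)) :: complex) = real_of_int \<bar>qchar (-1::'a)\<bar>"
        by (simp only: norm_of_int of_int_abs)
      ultimately have "cmod (of_int (qchar (-1::'a)) :: complex) = 1" by simp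
      thus ?thesis using WD normG1 by (simp add: norm_mult)
    qed
    ultimately have "sm * cmod S = real p * sm" using sqrt_p2 sm_def by simp
    hence "cmod S = real p" using sm_pos by simp
    thus False using hyp S_def by simp
  qed
  thus ?thesis using bentF unfolding non_dual_bent_def F_def by blast
qed

end



theorem corollary2:
  fixes p m :: nat and \<alpha> \<beta> :: "'a::{field,finite}"
  assumes "prime p" and "odd p" and "m > 0"
    and "CARD('a) = p ^ m"
    and lin_indep: "\<forall>a\<in>{0..<int p}. \<forall>b\<in>{0..<int p}. \<forall>c\<in>{0..<int p}.
           of_int a + of_int b * \<alpha> + of_int c * \<beta> = 0 \<longrightarrow> a = 0 \<and> b = 0 \<and> c = 0"
    and "cmod (\<Sum>y1\<in>{0..<int p}. \<Sum>y2\<in>{0..<int p}.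
           of_int (qchar (1 + of_int y1 * \<alpha> + of_int y2 * \<beta>)) * ep p (- (y1 * y2))) \<noteq> real p"
  shows "non_dual_bent p m
           (\<lambda>(x, y1, y2). (tr p m (x ^ 2)
              + (y1 + tr p m (\<alpha> * x ^ 2)) * (y2 + tr p m (\<beta> * x ^ 2))) mod int p)"
proof -
  interpret ffp p m "TYPE('a)"
    unfolding ffp_def using assms(1-4) by blast
  have cnz: "1 + of_int b1 * \<alpha> + of_int b2 * \<beta> \<noteq> 0"
    if b1: "b1 \<in> {0..<int p}" and b2: "b2 \<in> {0..<int p}" for b1 b2
  proof
    assume "1 + of_int b1 * \<alpha> + of_int b2 * \<beta> = 0"
    hence "of_int 1 + of_int b1 * \<alpha> + of_int b2 * \<beta> = 0" by simp
    moreover have one: "(1::int) \<in> {0..<int p}" using p_gt2 by simp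
    ultimately have "(1::int) = 0" using lin_indep[rule_format, OF one b1 b2] by blast
    thus False by simp
  qed
  show ?thesis by (rule main[OF cnz assms(6)])
qed

end
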